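(* Let $A\in\mathbb{R}^{n\times n}$, let $s$ be an integer with $1\leq s<d(A)$, and let $v_0\in\mathbb{R}^n$ with $\|v_0\|=1$ and $d(A,v_0)\geq s+1$. Then the normalized vectors of the Arnoldi cross iteration ACI($s$) started at $v_0$ satisfy $$\lim_{k\to\infty}\|w_{k+1}-w_k\|=0\quad\text{and}\quad\lim_{k\to\infty}\|v_{k+1}-v_k\|=0.$$
   Context: Notation: for $A\in\mathbb{R}^{n\times n}$, $d(A)$ is the degree of the minimal polynomial of $A$, $d(A,v)$ is the grade of $v$ w.r.t. $A$ (degree of the monic polynomial $p$ of smallest degree with $p(A)v=0$), $\mathcal{K}_k(A,v)=\mathrm{span}\{v,Av,\dots,A^{k-1}v\}$, $\mathcal{M}_s$ is the set of real monic polynomials of degree $s$, and $\|\cdot\|$ is the Euclidean norm. For a matrix $B$ and a vector $u$ with $d(B,u)\geq s$, let $P_s(\cdot\,;u)\in\mathcal{M}_s$ (determined with respect to $B$) be the unique monic polynomial with $P_s(B;u)u\perp\mathcal{K}_s(B,u)$. The Arnoldi cross iteration ACI($s$) started at $v_0$ is: for $k=0,1,2,\dots$: $\widetilde w_k=P_s(A;v_k)v_k$ (w.r.t. $A$), $w_k=\widetilde w_k/\|\widetilde w_k\|$, $\widetilde v_{k+1}=P_s(A^T;w_k)w_k$ (w.r.t. $A^T$), $v_{k+1}=\widetilde v_{k+1}/\|\widetilde v_{k+1}\|$. (Under the stated hypotheses all these vectors are nonzero.) *)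

theory Defs
  imports "HOL-Analysis.Analysis" "HOL-Computational_Algebra.Polynomial"
begin

definition matpow :: "real^'n^'n \<Rightarrow> nat \<Rightarrow> real^'n^'n" where
  "matpow A i = ((\<lambda>M. A ** M) ^^ i) (mat 1)"

definition poly_mat :: "real poly \<Rightarrow> real^'n^'n \<Rightarrow> real^'n^'n" where
  "poly_mat p A = (\<Sum>i\<le>degree p. coeff p i *\<^sub>R matpow A i)"

definition monic_deg :: "nat \<Rightarrow> real poly set" where
  "monic_deg s = {p. degree p = s \<and> lead_coeff p = 1}"

definition min_poly_deg :: "real^'n^'n \<Rightarrow> nat" where
  "min_poly_deg A = (LEAST d. \<exists>p\<in>monic_deg d. poly_mat p A = 0)"

definition grade :: "real^'n^'n \<Rightarrow> real^'n \<Rightarrow> nat" where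
  "grade A v = (LEAST d. \<exists>p\<in>monic_deg d. poly_mat p A *v v = 0)"

definition krylov :: "nat \<Rightarrow> real^'n^'n \<Rightarrow> real^'n \<Rightarrow> (real^'n) set" where
  "krylov k A v = span {matpow A i *v v | i. i < k}"

definition P_poly :: "nat \<Rightarrow> real^'n^'n \<Rightarrow> real^'n \<Rightarrow> real poly" where
  "P_poly s B u = (THE p. p \<in> monic_deg s \<and>
      (\<forall>y\<in>krylov s B u. (poly_mat p B *v u) \<bullet> y = 0))"

definition normalize_vec :: "real^'n \<Rightarrow> real^'n" where
  "normalize_vec x = inverse (norm x) *\<^sub>R x"

definition aci_w :: "nat \<Rightarrow> real^'n^'n \<Rightarrow> real^'n \<Rightarrow> real^'n" where
  "aci_w s A v = normalize_vec (poly_mat (P_poly s A v) A *v v)"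

primrec aci_v :: "nat \<Rightarrow> real^'n^'n \<Rightarrow> real^'n \<Rightarrow> nat \<Rightarrow> real^'n" where
  "aci_v s A v0 0 = v0"
| "aci_v s A v0 (Suc k) =
     (let w = aci_w s A (aci_v s A v0 k)
      in normalize_vec (poly_mat (P_poly s (transpose A) w) (transpose A) *v w))"

definition aci_wseq :: "nat \<Rightarrow> real^'n^'n \<Rightarrow> real^'n \<Rightarrow> nat \<Rightarrow> real^'n" where
  "aci_wseq s A v0 k = aci_w s A (aci_v s A v0 k)"

end

theory Submission
  imports Defs
begin

lemma matpow_0[simp]: "matpow B 0 = mat 1" by (simp add: matpow_def)
lemma matpow_Suc: "matpow B (Suc j) = B ** matpow B j" by (simp add: matpow_def)

lemma matpow_Suc_vec: "matpow B (Suc j) *v u = B *v (matpow B j *v u)"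
  by (simp add: matpow_Suc matrix_vector_mul_assoc)

lemma matpow_Suc': "matpow B (Suc j) = matpow B j ** B"
  by (induction j) (simp_all add: matpow_Suc matrix_mul_assoc matrix_mul_lid matrix_mul_rid)

lemma matpow_transpose: "matpow (transpose B) j = transpose (matpow B j)"
proof (induction j)
  case (Suc j)
  have "matpow (transpose B) (Suc j) = transpose B ** transpose (matpow B j)"
    using Suc by (simp add: matpow_Suc)
  also have "\<dots> = transpose (matpow B j ** B)" by (simp add: matrix_transpose_mul)
  also have "\<dots> = transpose (matpow B (Suc j))" by (simp add: matpow_Suc')
  finally show ?case .
qed (simp add: transpose_mat)

lemma inner_transpose: "((M::real^'n^'n) *v x) \<bullet> y = x \<bullet> (transpose M *v y)"
  by (metis dot_lmul_matrix vector_transpose_matrix transpose_transpose)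

lemma sum_mat_vec: "(\<Sum>i\<in>I. (f i :: real^'n^'n)) *v u = (\<Sum>i\<in>I. f i *v u)"
  by (induction I rule: infinite_finite_induct) (simp_all add: matrix_vector_mult_add_rdistrib)

lemma poly_mat_vec: "poly_mat p B *v u = (\<Sum>i\<le>degree p. coeff p i *\<^sub>R (matpow B i *v u))"
  unfolding poly_mat_def sum_mat_vec by (simp add: scaleR_matrix_vector_assoc)

lemma poly_mat_vec_le: assumes "degree p \<le> n"
  shows "poly_mat p B *v u = (\<Sum>i\<le>n. coeff p i *\<^sub>R (matpow B i *v u))"
proof -
  have "(\<Sum>i\<le>n. coeff p i *\<^sub>R (matpow B i *v u)) = (\<Sum>i\<le>degree p. coeff p i *\<^sub>R (matpow B i *v u))"
    by (rule sum.mono_neutral_right) (auto simp: assms coeff_eq_0)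
  then show ?thesis by (simp add: poly_mat_vec)
qed

lemma krylov_iff: "y \<in> krylov d B u \<longleftrightarrow> (\<exists>c. y = (\<Sum>i<d. c i *\<^sub>R (matpow B i *v u)))"
proof
  assume "y \<in> krylov d B u"
  then show "\<exists>c. y = (\<Sum>i<d. c i *\<^sub>R (matpow B i *v u))"
    unfolding krylov_def
  proof (induction rule: span_induct_alt)
    case base
    then show ?case by (rule exI[of _ "\<lambda>_. 0"]) simp
  next
    case (step c x y)
    then obtain e where e: "y = (\<Sum>i<d. e i *\<^sub>R (matpow B i *v u))" by blast
    from step obtain j where j: "x = matpow B j *v u" "j < d" by blast
    show ?case
      by (rule exI[of _ "\<lambda>i. e i + (if i = j then c else 0)"])
         (simp add: e j scaleR_add_left sum.distrib if_distrib[of "\<lambda>a. a *\<^sub>R _"] cong: if_cong)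
  qed
next
  assume "\<exists>c. y = (\<Sum>i<d. c i *\<^sub>R (matpow B i *v u))"
  then obtain c where "y = (\<Sum>i<d. c i *\<^sub>R (matpow B i *v u))" by blast
  then show "y \<in> krylov d B u" unfolding krylov_def
    by (metis (mono_tags, lifting) span_sum span_scale span_base lessThan_iff mem_Collect_eq)
qed


definition NoDep :: "nat \<Rightarrow> real^'n^'n \<Rightarrow> real^'n \<Rightarrow> bool" where
  "NoDep n B u \<longleftrightarrow> (\<forall>d<n. matpow B d *v u \<notin> krylov d B u)"

lemma NoDep_indep:
  assumes "NoDep n B u" "(\<Sum>i<n. e i *\<^sub>R (matpow B i *v u)) = 0"
  shows "\<forall>i<n. e i = 0"
  using assms
proof (induction n)
  case 0 then show ?case by simp
next
  case (Suc n)
  have nd: "NoDep n B u" using Suc.prems(1) by (simp add: NoDep_def)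
  have en: "e n = 0"
  proof (rule ccontr)
    assume ne: "e n \<noteq> 0"
    from Suc.prems(2) have "e n *\<^sub>R (matpow B n *v u) = - (\<Sum>i<n. e i *\<^sub>R (matpow B i *v u))"
      by (simp add: add_eq_0_iff2 add.commute)
    moreover have "(\<Sum>i<n. e i *\<^sub>R (matpow B i *v u)) \<in> krylov n B u"
      by (auto simp: krylov_iff)
    ultimately have "e n *\<^sub>R (matpow B n *v u) \<in> krylov n B u"
      by (simp add: krylov_def span_neg)
    then have "inverse (e n) *\<^sub>R (e n *\<^sub>R (matpow B n *v u)) \<in> krylov n B u"
      unfolding krylov_def by (rule span_scale)
    then have "matpow B n *v u \<in> krylov n B u" using ne by simp
    then show False using Suc.prems(1) by (simp add: NoDep_def)
  qed
  then have "(\<Sum>i<n. e i *\<^sub>R (matpow B i *v u)) = 0" using Suc.prems(2) by simp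
  from Suc.IH[OF nd this] en show ?case using less_Suc_eq by auto
qed


lemma mk_poly:
  fixes c :: "nat \<Rightarrow> real" and d :: nat
  defines "p \<equiv> monom 1 d - (\<Sum>i<d. monom (c i) i)"
  shows "p \<in> monic_deg d"
    and "poly_mat p B *v u = matpow B d *v u - (\<Sum>i<d. c i *\<^sub>R (matpow B i *v u))"
proof -
  have cf: "coeff p i = (if i = d then 1 else 0) - (if i < d then c i else 0)" for i
    by (simp add: p_def coeff_sum coeff_monom)
  have dg: "degree p = d"
  proof (rule antisym)
    show "degree p \<le> d" by (rule degree_le) (simp add: cf)
    show "d \<le> degree p" by (rule le_degree) (simp add: cf)
  qed
  then show "p \<in> monic_deg d" by (simp add: monic_deg_def cf)
  have "poly_mat p B *v u = (\<Sum>i\<le>d. coeff p i *\<^sub>R (matpow B i *v u))"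
    by (simp add: poly_mat_vec dg)
  also have "\<dots> = (\<Sum>i<d. coeff p i *\<^sub>R (matpow B i *v u)) + matpow B d *v u"
    by (simp add: lessThan_Suc_atMost[symmetric] cf)
  also have "(\<Sum>i<d. coeff p i *\<^sub>R (matpow B i *v u)) = - (\<Sum>i<d. c i *\<^sub>R (matpow B i *v u))"
    by (simp add: cf sum_negf[symmetric])
  finally show "poly_mat p B *v u = matpow B d *v u - (\<Sum>i<d. c i *\<^sub>R (matpow B i *v u))"
    by simp
qed

lemma monic_expand:
  assumes "p \<in> monic_deg d"
  shows "poly_mat p B *v u - matpow B d *v u = (\<Sum>i<d. coeff p i *\<^sub>R (matpow B i *v u))"
proof -
  have "poly_mat p B *v u = (\<Sum>i\<le>d. coeff p i *\<^sub>R (matpow B i *v u))"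
    using assms by (simp add: poly_mat_vec monic_deg_def)
  also have "\<dots> = (\<Sum>i<d. coeff p i *\<^sub>R (matpow B i *v u)) + matpow B d *v u"
    using assms by (auto simp: lessThan_Suc_atMost[symmetric] monic_deg_def)
  finally show ?thesis by simp
qed

lemma monic_diff_krylov:
  assumes "p \<in> monic_deg d"
  shows "poly_mat p B *v u - matpow B d *v u \<in> krylov d B u"
  unfolding monic_expand[OF assms] krylov_iff by blast

lemma P_spec:
  assumes nd: "NoDep s B u"
  shows "P_poly s B u \<in> monic_deg s \<and>
      (\<forall>y\<in>krylov s B u. (poly_mat (P_poly s B u) B *v u) \<bullet> y = 0)"
  unfolding P_poly_def
proof (rule theI')
  let ?K = "krylov s B u"
  obtain y z where y: "y \<in> span ?K" and z: "\<And>w. w \<in> span ?K \<Longrightarrow> orthogonal z w"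
    and xyz: "matpow B s *v u = y + z"
    using orthogonal_subspace_decomp_exists by blast
  have "y \<in> ?K" using y by (simp add: krylov_def span_span)
  then obtain c where c: "y = (\<Sum>i<s. c i *\<^sub>R (matpow B i *v u))" by (auto simp: krylov_iff)
  define p where "p = monom 1 s - (\<Sum>i<s. monom (c i) i)"
  have pm: "p \<in> monic_deg s" unfolding p_def by (rule mk_poly)
  have "poly_mat p B *v u = z" unfolding p_def mk_poly(2) using xyz c by simp
  then have ex: "p \<in> monic_deg s \<and> (\<forall>y\<in>?K. (poly_mat p B *v u) \<bullet> y = 0)"
    using pm z by (simp add: orthogonal_def krylov_def span_span)
  show "\<exists>!p. p \<in> monic_deg s \<and> (\<forall>y\<in>?K. (poly_mat p B *v u) \<bullet> y = 0)"
  proof (rule ex1I[of _ p])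
    show "p \<in> monic_deg s \<and> (\<forall>y\<in>?K. (poly_mat p B *v u) \<bullet> y = 0)" by (rule ex)
  next
    fix q assume q: "q \<in> monic_deg s \<and> (\<forall>y\<in>?K. (poly_mat q B *v u) \<bullet> y = 0)"
    let ?D = "poly_mat q B *v u - poly_mat p B *v u"
    have D: "?D = (\<Sum>i<s. (coeff q i - coeff p i) *\<^sub>R (matpow B i *v u))"
      using monic_expand[OF pm, of B u] monic_expand[of q s B u] q
      by (simp add: scaleR_diff_left sum_subtractf algebra_simps)
    have "?D \<in> ?K" unfolding D krylov_iff by (rule exI[of _ "\<lambda>i. coeff q i - coeff p i"]) (rule refl)
    then have "?D \<bullet> ?D = 0" using q ex by (simp add: inner_diff_left)
    then have "?D = 0" by simp
    then have "(\<Sum>i<s. (coeff q i - coeff p i) *\<^sub>R (matpow B i *v u)) = 0" using D by simp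
    from NoDep_indep[OF nd this] have ce: "\<forall>i<s. coeff q i - coeff p i = 0" .
    show "q = p"
    proof (rule poly_eqI)
      fix i
      show "coeff q i = coeff p i"
      proof (cases "i < s")
        case True then show ?thesis using ce by simp
      next
        case False
        then show ?thesis using q pm
          by (cases "i = s") (auto simp: monic_deg_def coeff_eq_0)
      qed
    qed
  qed
qed


definition zv :: "nat \<Rightarrow> real^'n^'n \<Rightarrow> real^'n \<Rightarrow> real^'n" where
  "zv s B u = poly_mat (P_poly s B u) B *v u"

lemma z_facts:
  assumes "NoDep s B u"
  shows "zv s B u - matpow B s *v u \<in> krylov s B u" "\<forall>y\<in>krylov s B u. zv s B u \<bullet> y = 0"
  using P_spec[OF assms] monic_diff_krylov unfolding zv_def by blast+

lemma krylov_mono: "d \<le> s \<Longrightarrow> krylov d B u \<subseteq> krylov s B u"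
  unfolding krylov_def by (rule span_mono) auto

lemma z_ortho: "NoDep s B u \<Longrightarrow> j < s \<Longrightarrow> zv s B u \<bullet> (matpow B j *v u) = 0"
  using z_facts(2)[of s B u] unfolding krylov_def by (auto intro: span_base)

lemma z_top: assumes "NoDep s B u" shows "zv s B u \<bullet> (matpow B s *v u) = zv s B u \<bullet> zv s B u"
proof -
  have "zv s B u \<bullet> (zv s B u - matpow B s *v u) = 0" using z_facts[OF assms] by blast
  then show ?thesis by (simp add: inner_diff_right)
qed

lemma NoDep_mono: "NoDep n B u \<Longrightarrow> m \<le> n \<Longrightarrow> NoDep m B u"
  by (auto simp: NoDep_def)

lemma z_nonzero: assumes "NoDep (Suc s) B u" shows "zv s B u \<noteq> 0"
proof
  assume z0: "zv s B u = 0"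
  have "zv s B u - matpow B s *v u \<in> krylov s B u"
    using z_facts(1)[OF NoDep_mono[OF assms]] by simp
  then have "- (matpow B s *v u) \<in> krylov s B u" using z0 by simp
  then have "matpow B s *v u \<in> krylov s B u" unfolding krylov_def using span_neg by fastforce
  then show False using assms by (simp add: NoDep_def)
qed

lemma krylov_invariant:
  assumes "matpow B d *v w \<in> krylov d B w"
  shows "matpow B m *v w \<in> krylov d B w"
proof (induction m)
  case 0
  show ?case
  proof (cases d)
    case 0 then show ?thesis using assms by simp
  next
    case (Suc d') then show ?thesis unfolding krylov_def
      by (intro span_base) (auto intro!: exI[of _ 0])
  qed
next
  case (Suc m)
  have cl: "B *v y \<in> krylov d B w" if yk: "y \<in> krylov d B w" for y
  proof -
    obtain c where c: "y = (\<Sum>i<d. c i *\<^sub>R (matpow B i *v w))" using yk by (auto simp: krylov_iff)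
    have "B *v y = (\<Sum>i<d. c i *\<^sub>R (matpow B (Suc i) *v w))"
      unfolding c by (simp add: matpow_Suc_vec linear_sum[OF bounded_linear.linear[OF matrix_vector_mul_bounded_linear]]
          linear_scale[OF bounded_linear.linear[OF matrix_vector_mul_bounded_linear]] del: scaleR_matrix_vector_assoc)
    also have "\<dots> \<in> krylov d B w" unfolding krylov_def
    proof (intro span_sum span_scale)
      fix i assume "i \<in> {..<d}"
      then show "matpow B (Suc i) *v w \<in> span {matpow B i *v w |i. i < d}"
        using assms unfolding krylov_def
        by (cases "Suc i = d") (auto intro!: span_base)
    qed
    finally show ?thesis .
  qed
  show ?case using cl[OF Suc] by (simp add: matpow_Suc_vec)
qed


lemma inner_pow_transpose:
  "(matpow (transpose B) i *v w) \<bullet> u = w \<bullet> (matpow B i *v u)"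
  by (simp add: matpow_transpose dot_lmul_matrix del: vector_transpose_matrix flip: vector_transpose_matrix)

lemma step_lemma:
  fixes B :: "real^'n^'n"
  assumes nd: "NoDep (Suc s) B u"
  defines "z \<equiv> zv s B u"
  defines "w \<equiv> normalize_vec z"
  shows "norm z > 0" "norm w = 1"
    "\<forall>y\<in>krylov s (transpose B) w. y \<bullet> u = 0"
    "(matpow (transpose B) s *v w) \<bullet> u = norm z"
    "NoDep (Suc s) (transpose B) w"
proof -
  have nds: "NoDep s B u" using NoDep_mono[OF nd] by simp
  show zp: "norm z > 0" using z_nonzero[OF nd] z_def by simp
  show "norm w = 1" using zp by (simp add: w_def normalize_vec_def)
  have wi: "w \<bullet> x = inverse (norm z) * (z \<bullet> x)" for x
    by (simp add: w_def normalize_vec_def)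
  show orth: "\<forall>y\<in>krylov s (transpose B) w. y \<bullet> u = 0"
  proof
    fix y assume "y \<in> krylov s (transpose B) w"
    then obtain c where c: "y = (\<Sum>i<s. c i *\<^sub>R (matpow (transpose B) i *v w))"
      by (auto simp: krylov_iff)
    have "y \<bullet> u = (\<Sum>i<s. c i * (w \<bullet> (matpow B i *v u)))"
      unfolding c by (simp add: inner_sum_left inner_pow_transpose)
    also have "\<dots> = 0" using z_ortho[OF nds] by (simp add: wi z_def)
    finally show "y \<bullet> u = 0" .
  qed
  show top: "(matpow (transpose B) s *v w) \<bullet> u = norm z"
  proof -
    have "(matpow (transpose B) s *v w) \<bullet> u = inverse (norm z) * (z \<bullet> z)"
      by (simp add: inner_pow_transpose wi z_top[OF nds] z_def)
    also have "\<dots> = norm z" using zp by (simp add: power2_norm_eq_inner[symmetric] power2_eq_square)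
    finally show ?thesis .
  qed
  show "NoDep (Suc s) (transpose B) w"
    unfolding NoDep_def
  proof (intro allI impI notI)
    fix d assume d: "d < Suc s" and m: "matpow (transpose B) d *v w \<in> krylov d (transpose B) w"
    have "matpow (transpose B) s *v w \<in> krylov d (transpose B) w" by (rule krylov_invariant[OF m])
    then have "matpow (transpose B) s *v w \<in> krylov s (transpose B) w"
      using krylov_mono[of d s] d by auto
    then have "(matpow (transpose B) s *v w) \<bullet> u = 0" using orth by blast
    then show False using top zp by simp
  qed
qed

lemma cross_lemma:
  assumes nd: "NoDep (Suc s) B' w" and orth: "\<forall>y\<in>krylov s B' w. y \<bullet> u = 0"
    and top: "(matpow B' s *v w) \<bullet> u = a"
  shows "zv s B' w \<bullet> u = a"
proof -
  have "zv s B' w - matpow B' s *v w \<in> krylov s B' w"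
    using z_facts(1)[OF NoDep_mono[OF nd]] by simp
  then have "(zv s B' w - matpow B' s *v w) \<bullet> u = 0" using orth by blast
  then show ?thesis using top by (simp add: inner_diff_left)
qed

lemma z_bound: assumes "NoDep (Suc s) B u" shows "norm (zv s B u) \<le> norm (matpow B s *v u)"
proof -
  have nds: "NoDep s B u" using NoDep_mono[OF assms] by simp
  have "norm (zv s B u) ^ 2 = zv s B u \<bullet> (matpow B s *v u)"
    by (simp add: z_top[OF nds] power2_norm_eq_inner)
  also have "\<dots> \<le> norm (zv s B u) * norm (matpow B s *v u)" by (rule Cauchy_Schwarz_ineq2[THEN order_trans[OF abs_ge_self]])
  finally have "norm (zv s B u) * norm (zv s B u) \<le> norm (zv s B u) * norm (matpow B s *v u)"
    by (simp add: power2_eq_square)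
  moreover have "norm (zv s B u) > 0" using z_nonzero[OF assms] by simp
  ultimately show ?thesis by simp
qed


lemma conv_part:
  fixes a b :: "nat \<Rightarrow> real"
  assumes a0: "a 0 > 0" and ab: "\<And>k. a k \<le> b k" and ba: "\<And>k. b k \<le> a (Suc k)"
    and bd: "\<And>k. a k \<le> K"
  shows "(\<lambda>k. a k / b k) \<longlonglongrightarrow> 1" "(\<lambda>k. b k / a (Suc k)) \<longlonglongrightarrow> 1"
proof -
  have inc: "incseq a" by (rule incseq_SucI) (use ab ba order_trans in blast)
  have bdd: "bdd_above (range a)" using bd by (intro bdd_aboveI[of _ K]) auto
  define L where "L = (SUP i. a i)"
  have La: "a \<longlonglongrightarrow> L" unfolding L_def by (rule LIMSEQ_incseq_SUP[OF bdd inc])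
  have L0: "L \<ge> a 0" unfolding L_def by (rule cSUP_upper[OF _ bdd]) simp
  have LaS: "(\<lambda>k. a (Suc k)) \<longlonglongrightarrow> L" using La by (rule LIMSEQ_Suc)
  have Lb: "b \<longlonglongrightarrow> L"
    by (rule tendsto_sandwich[OF _ _ La LaS]) (simp_all add: ab ba)
  have Lnz: "L \<noteq> 0" using L0 a0 by simp
  show "(\<lambda>k. a k / b k) \<longlonglongrightarrow> 1"
    using tendsto_divide[OF La Lb Lnz] Lnz by simp
  show "(\<lambda>k. b k / a (Suc k)) \<longlonglongrightarrow> 1"
    using tendsto_divide[OF Lb LaS Lnz] Lnz by simp
qed

lemma unit_dist:
  fixes x y :: "'a::real_inner"
  assumes "norm x = 1" "norm y = 1"
  shows "norm (x - y) = sqrt (2 - 2 * (x \<bullet> y))"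
proof -
  have xx: "x \<bullet> x = 1" using assms(1) by (simp flip: power2_norm_eq_inner)
  have yy: "y \<bullet> y = 1" using assms(2) by (simp flip: power2_norm_eq_inner)
  have "norm (x - y) ^ 2 = (x - y) \<bullet> (x - y)" by (rule power2_norm_eq_inner)
  also have "\<dots> = 2 - 2 * (x \<bullet> y)"
    by (simp add: inner_diff_left inner_diff_right xx yy inner_commute[of y x])
  finally have "norm (x - y) ^ 2 = 2 - 2 * (x \<bullet> y)" .
  then show ?thesis by (metis norm_ge_zero real_sqrt_unique)
qed

lemma dist_to0:
  fixes x :: "nat \<Rightarrow> 'a::real_inner" and r :: "nat \<Rightarrow> real"
  assumes "\<And>k. norm (x k) = 1" "\<And>k. x (Suc k) \<bullet> x k = r k" "r \<longlonglongrightarrow> 1"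
  shows "(\<lambda>k. norm (x (Suc k) - x k)) \<longlonglongrightarrow> 0"
proof -
  have "(\<lambda>k. sqrt (2 - 2 * r k)) \<longlonglongrightarrow> sqrt (2 - 2 * 1)"
    by (intro tendsto_intros assms(3))
  moreover have "norm (x (Suc k) - x k) = sqrt (2 - 2 * r k)" for k
    using unit_dist[OF assms(1) assms(1)] assms(2) by simp
  ultimately show ?thesis by simp
qed


lemma grade_NoDep:
  assumes "grade A v0 \<ge> s + 1"
  shows "NoDep (Suc s) A v0"
  unfolding NoDep_def
proof (intro allI impI notI)
  fix d assume d: "d < Suc s" and m: "matpow A d *v v0 \<in> krylov d A v0"
  then obtain c where c: "matpow A d *v v0 = (\<Sum>i<d. c i *\<^sub>R (matpow A i *v v0))"
    by (auto simp: krylov_iff)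
  define p where "p = monom 1 d - (\<Sum>i<d. monom (c i) i)"
  have "p \<in> monic_deg d" unfolding p_def by (rule mk_poly)
  moreover have "poly_mat p A *v v0 = 0" unfolding p_def mk_poly(2) c by simp
  ultimately have "grade A v0 \<le> d" unfolding grade_def by (intro Least_le) blast
  then show False using assms d by simp
qed

theorem theorem3p4:
  fixes A :: "real^'n^'n" and s :: nat and v0 :: "real^'n"
  assumes "1 \<le> s" and "s < min_poly_deg A"
    and "norm v0 = 1" and "grade A v0 \<ge> s + 1"
  shows "(\<lambda>k. norm (aci_wseq s A v0 (Suc k) - aci_wseq s A v0 k)) \<longlonglongrightarrow> 0 \<and>
         (\<lambda>k. norm (aci_v s A v0 (Suc k) - aci_v s A v0 k)) \<longlonglongrightarrow> 0"
proof -
  define vk where "vk = aci_v s A v0"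
  define wk where "wk = aci_wseq s A v0"
  have wk_eq: "wk k = normalize_vec (zv s A (vk k))" for k
    by (simp add: wk_def vk_def aci_wseq_def aci_w_def zv_def)
  have vk_Suc: "vk (Suc k) = normalize_vec (zv s (transpose A) (wk k))" for k
    by (simp add: wk_def vk_def aci_wseq_def aci_w_def zv_def Let_def)
  define a where "a k = norm (zv s A (vk k))" for k
  define b where "b k = norm (zv s (transpose A) (wk k))" for k
  have inv: "norm (vk k) = 1 \<and> NoDep (Suc s) A (vk k)" for k
  proof (induction k)
    case 0 then show ?case using assms grade_NoDep by (simp add: vk_def)
  next
    case (Suc k)
    then have nd: "NoDep (Suc s) A (vk k)" by simp
    note S1 = step_lemma[OF nd, folded wk_eq]
    note S2 = step_lemma[OF S1(5), folded vk_Suc, simplified]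
    show ?case using S2 by simp
  qed
  have facts: "vk (Suc k) \<bullet> vk k = a k / b k \<and> a k \<le> b k \<and>
      wk (Suc k) \<bullet> wk k = b k / a (Suc k) \<and> b k \<le> a (Suc k) \<and> a k > 0 \<and> b k > 0" for k
  proof -
    have nd: "NoDep (Suc s) A (vk k)" and nv: "norm (vk k) = 1" using inv by simp_all
    note S1 = step_lemma[OF nd, folded wk_eq a_def]
    note S2 = step_lemma[OF S1(5), folded vk_Suc b_def, simplified]
    have c1: "zv s (transpose A) (wk k) \<bullet> vk k = a k"
      by (rule cross_lemma[OF S1(5) S1(3) S1(4)])
    have c2: "zv s A (vk (Suc k)) \<bullet> wk k = b k"
      by (rule cross_lemma[OF S2(5) S2(3) S2(4)])
    have ak: "a (Suc k) = norm (zv s A (vk (Suc k)))" by (simp add: a_def)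
    have ap: "a (Suc k) > 0" using inv[of "Suc k"] z_nonzero ak by auto
    have e1: "vk (Suc k) \<bullet> vk k = a k / b k"
      using c1 by (simp add: vk_Suc normalize_vec_def b_def divide_inverse mult.commute)
    have e2: "wk (Suc k) \<bullet> wk k = b k / a (Suc k)"
      using c2 by (simp add: wk_eq[of "Suc k"] normalize_vec_def ak divide_inverse mult.commute)
    have l1: "a k \<le> b k"
    proof -
      have "a k \<le> norm (zv s (transpose A) (wk k)) * norm (vk k)"
        using c1 Cauchy_Schwarz_ineq2[of "zv s (transpose A) (wk k)" "vk k"] by simp
      then show ?thesis using nv b_def by simp
    qed
    have l2: "b k \<le> a (Suc k)"
    proof -
      have "b k \<le> norm (zv s A (vk (Suc k))) * norm (wk k)"
        using c2 Cauchy_Schwarz_ineq2[of "zv s A (vk (Suc k))" "wk k"] by simp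
      then show ?thesis using S1(2) ak by simp
    qed
    show ?thesis using e1 e2 l1 l2 S1(1) S2(1) by simp
  qed
  obtain K where K: "\<And>x. norm (matpow A s *v x) \<le> norm x * K"
    using bounded_linear.bounded[OF matrix_vector_mul_bounded_linear] by blast
  have abd: "a k \<le> K" for k
    using z_bound[of s A "vk k"] inv[of k] K[of "vk k"] by (simp add: a_def)
  have nw: "norm (wk k) = 1" for k
    using step_lemma(2)[of s A "vk k"] inv[of k] by (simp add: wk_eq)
  have nv: "norm (vk k) = 1" for k using inv by simp
  have cv: "(\<lambda>k. a k / b k) \<longlonglongrightarrow> 1" "(\<lambda>k. b k / a (Suc k)) \<longlonglongrightarrow> 1"
    using conv_part[of a b K] facts abd by auto
  show ?thesis
    using dist_to0[of wk, OF nw _ cv(2)] dist_to0[of vk, OF nv _ cv(1)] facts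
    by (simp add: vk_def wk_def)
qed

end
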